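(* Let $\langle\{a,b\},C,d,O,v,\{\prec,\prec^{-1}\}\rangle$ be a two-player infinite sequential game in which player $a$ has preference $\prec$ and player $b$ has preference $\prec^{-1}$, let $\Gamma\subseteq\mathcal{P}(C^\omega)$, and assume: (1) $\prec$ is a strict weak order; (2) for every play $p\in C^\omega$ and increasing $\varphi:\mathbb{N}\to\mathbb{N}$, if $d(p_{<\varphi(n)})=a$ and $G_a(p_{<\varphi(n+1)})\subsetneq G_a(p_{<\varphi(n)})$ for all $n$, then $v(p)\in\bigcap_n G_a(p_{<\varphi(n)})$; (3) for all $\gamma\in C^*$ there exists a strategy $s$ of $a$ with $g_a(\gamma,s)=G_a(\gamma)$, and there exists a strategy $s$ of $b$ with $g_b(\gamma,s)=G_b(\gamma)$; (4) for every non-empty closed $E\subseteq C^\omega$, $v[E]$ has a $\prec$-maximal and a $\prec$-minimal element (i.e. some $o\in v[E]$ with $\neg(o\prec o')$ for all $o'\in v[E]$, and some $o\in v[E]$ with $\neg(o'\prec o)$ for all $o'\in v[E]$); (5) for every $\prec$-extremal interval $I$ and $\gamma\in C^*$, $v^{-1}[I]\cap\gamma C^\omega\in\Gamma$; (6) the win-lose game $\langle C,D,W\rangle$ is determined for all $W\in\Gamma$ and $D\subseteq C^*$. Then the game has a subgame perfect equilibrium.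
   Context: A strategy of player $X$ is a function $s:d^{-1}(\{X\})\to C$; a profile is identified with $\sigma:C^*\to C$. For $\gamma\in C^*$, the play $p^\gamma(\sigma)$ is given by $p_n=\gamma_n$ for $n<|\gamma|$ and $p_n=\sigma(p_{<n})$ otherwise ($p_{<n}$ the length-$n$ prefix). A profile $\sigma$ is a subgame perfect equilibrium if there are no $\gamma\in C^*$, player $X$ and strategy $s$ of $X$ such that $v(p^\gamma(\sigma))\prec_X v(p^\gamma(\sigma_{X\mapsto s}))$ (with $\prec_a=\prec$, $\prec_b=\prec^{-1}$, and $\sigma_{X\mapsto s}$ agreeing with $s$ on $d^{-1}(\{X\})$ and with $\sigma$ elsewhere). For a partial $t:\subseteq C^*\to C$, $P(t)$ is the set of plays $p(\sigma)$ of total $\sigma$ extending $t$. For a strategy $s$ of $X$ and $\gamma\in C^*$, $s|_\gamma$ is its restriction to histories extending $\gamma$; $g_X(\gamma,s):=\{o\in O\mid\exists p\in P(s|_\gamma)\cap\gamma C^\omega,\ \neg(o\prec_X v(p))\}$ and $G_X(\gamma):=\bigcap_s g_X(\gamma,s)$. A strict weak order is an irreflexive, transitive relation with $\neg(x\prec y)\wedge\neg(y\prec z)\Rightarrow\neg(x\prec z)$. A $\prec$-extremal interval is a set $I\subseteq O$ that is either terminal (if $o\in I$ and $\neg(o'\prec o)$ then $o'\in I$) or initial (if $o\in I$ and $\neg(o\prec o')$ then $o'\in I$). The win-lose game $\langle C,D,W\rangle$ ($D\subseteq C^*$, $W\subseteq C^\omega$) is the two-player game where the first player chooses after histories in $D$,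 the second after histories in $C^*\setminus D$, and the first player wins iff the play lies in $W$; it is determined if one of the players has a winning strategy. *)

theory Defs
  imports Main
begin

datatype player = Pa | Pb

definition pre :: "(nat \<Rightarrow> 'c) \<Rightarrow> nat \<Rightarrow> 'c list" where
  "pre p n = map p [0..<n]"

fun hist :: "'c list \<Rightarrow> ('c list \<Rightarrow> 'c) \<Rightarrow> nat \<Rightarrow> 'c list" where
  "hist \<gamma> \<sigma> 0 = []"
| "hist \<gamma> \<sigma> (Suc n) =
     hist \<gamma> \<sigma> n @ [if n < length \<gamma> then \<gamma> ! n else \<sigma> (hist \<gamma> \<sigma> n)]"

definition playg :: "'c list \<Rightarrow> ('c list \<Rightarrow> 'c) \<Rightarrow> nat \<Rightarrow> 'c" where
  "playg \<gamma> \<sigma> n = hist \<gamma> \<sigma> (Suc n) ! n"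

definition prefX :: "('o \<Rightarrow> 'o \<Rightarrow> bool) \<Rightarrow> player \<Rightarrow> 'o \<Rightarrow> 'o \<Rightarrow> bool" where
  "prefX r X x y = (if X = Pa then r x y else r y x)"

(* \<sigma>_{X \<mapsto> s}; strategies are represented as total functions whose values
   outside d^{-1}({X}) are irrelevant *)
definition upd :: "('c list \<Rightarrow> player) \<Rightarrow> ('c list \<Rightarrow> 'c) \<Rightarrow> player \<Rightarrow> ('c list \<Rightarrow> 'c) \<Rightarrow> 'c list \<Rightarrow> 'c" where
  "upd d \<sigma> X s = (\<lambda>h. if d h = X then s h else \<sigma> h)"

definition is_SPE :: "('c list \<Rightarrow> player) \<Rightarrow> ((nat \<Rightarrow> 'c) \<Rightarrow> 'o) \<Rightarrow> ('o \<Rightarrow> 'o \<Rightarrow> bool) \<Rightarrow> ('c list \<Rightarrow> 'c) \<Rightarrow> bool" where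
  "is_SPE d v r \<sigma> \<longleftrightarrow>
     \<not> (\<exists>\<gamma> X s. prefX r X (v (playg \<gamma> \<sigma>)) (v (playg \<gamma> (upd d \<sigma> X s))))"

definition cyl :: "'c list \<Rightarrow> (nat \<Rightarrow> 'c) set" where
  "cyl \<gamma> = {p. \<forall>i < length \<gamma>. p i = \<gamma> ! i}"

(* P(s|_\<gamma>): plays p(\<sigma>) of total profiles \<sigma> extending the restriction of the
   strategy s of X (domain d^{-1}({X})) to histories extending \<gamma> *)
definition Pres :: "('c list \<Rightarrow> player) \<Rightarrow> player \<Rightarrow> 'c list \<Rightarrow> ('c list \<Rightarrow> 'c) \<Rightarrow> (nat \<Rightarrow> 'c) set" where
  "Pres d X \<gamma> s = {playg [] \<sigma> | \<sigma>. \<forall>h. d h = X \<and> take (length \<gamma>) h = \<gamma> \<longrightarrow> \<sigma> h = s h}"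

definition gX :: "('c list \<Rightarrow> player) \<Rightarrow> ((nat \<Rightarrow> 'c) \<Rightarrow> 'o) \<Rightarrow> ('o \<Rightarrow> 'o \<Rightarrow> bool) \<Rightarrow> player \<Rightarrow> 'c list \<Rightarrow> ('c list \<Rightarrow> 'c) \<Rightarrow> 'o set" where
  "gX d v r X \<gamma> s = {x. \<exists>p \<in> Pres d X \<gamma> s \<inter> cyl \<gamma>. \<not> prefX r X x (v p)}"

definition GX :: "('c list \<Rightarrow> player) \<Rightarrow> ((nat \<Rightarrow> 'c) \<Rightarrow> 'o) \<Rightarrow> ('o \<Rightarrow> 'o \<Rightarrow> bool) \<Rightarrow> player \<Rightarrow> 'c list \<Rightarrow> 'o set" where
  "GX d v r X \<gamma> = (\<Inter>s. gX d v r X \<gamma> s)"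

definition strict_weak_order :: "('o \<Rightarrow> 'o \<Rightarrow> bool) \<Rightarrow> bool" where
  "strict_weak_order r \<longleftrightarrow> (\<forall>x. \<not> r x x) \<and> (\<forall>x y z. r x y \<and> r y z \<longrightarrow> r x z)
     \<and> (\<forall>x y z. \<not> r x y \<and> \<not> r y z \<longrightarrow> \<not> r x z)"

definition extremal_interval :: "('o \<Rightarrow> 'o \<Rightarrow> bool) \<Rightarrow> 'o set \<Rightarrow> bool" where
  "extremal_interval r I \<longleftrightarrow>
     (\<forall>x \<in> I. \<forall>y. \<not> r y x \<longrightarrow> y \<in> I) \<or> (\<forall>x \<in> I. \<forall>y. \<not> r x y \<longrightarrow> y \<in> I)"

(* closed sets of the product of discrete topologies on C^\<omega> *)
definition closed_plays :: "(nat \<Rightarrow> 'c) set \<Rightarrow> bool" where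
  "closed_plays E \<longleftrightarrow> (\<forall>p. (\<forall>n. \<exists>q \<in> E. pre q n = pre p n) \<longrightarrow> p \<in> E)"

definition wl_play :: "'c list set \<Rightarrow> ('c list \<Rightarrow> 'c) \<Rightarrow> ('c list \<Rightarrow> 'c) \<Rightarrow> nat \<Rightarrow> 'c" where
  "wl_play D s1 s2 = playg [] (\<lambda>h. if h \<in> D then s1 h else s2 h)"

definition wl_determined :: "'c list set \<Rightarrow> (nat \<Rightarrow> 'c) set \<Rightarrow> bool" where
  "wl_determined D W \<longleftrightarrow>
     (\<exists>s1. \<forall>s2. wl_play D s1 s2 \<in> W) \<or> (\<exists>s2. \<forall>s1. wl_play D s1 s2 \<notin> W)"

end

theory Submission
  imports Defs
begin

lemma length_pre[simp]: "length (pre p n) = n" by (simp add: pre_def)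
lemma pre_0[simp]: "pre p 0 = []" by (simp add: pre_def)
lemma pre_Suc: "pre p (Suc n) = pre p n @ [p n]" by (simp add: pre_def)
lemma pre_nth[simp]: "i < n \<Longrightarrow> pre p n ! i = p i" by (simp add: pre_def)
lemma take_pre[simp]: "take m (pre p n) = pre p (min m n)"
  by (cases "m \<le> n") (simp_all add: pre_def take_map min_def take_upt)
lemma pre_eq_iff: "pre p n = pre q n \<longleftrightarrow> (\<forall>i<n. p i = q i)"
  by (auto simp: pre_def)
lemma cyl_pre: "p \<in> cyl \<gamma> \<longleftrightarrow> pre p (length \<gamma>) = \<gamma>"
  unfolding cyl_def mem_Collect_eq
proof
  assume "\<forall>i<length \<gamma>. p i = \<gamma> ! i" then show "pre p (length \<gamma>) = \<gamma>"
    by (intro nth_equalityI) auto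
next
  assume a: "pre p (length \<gamma>) = \<gamma>"
  show "\<forall>i<length \<gamma>. p i = \<gamma> ! i"
  proof (intro allI impI)
    fix i assume "i < length \<gamma>"
    then have "pre p (length \<gamma>) ! i = p i" by simp
    then show "p i = \<gamma> ! i" using a by simp
  qed
qed

lemma length_hist[simp]: "length (hist \<gamma> \<sigma> n) = n" by (induct n) auto
lemma take_hist: "m \<le> n \<Longrightarrow> take m (hist \<gamma> \<sigma> n) = hist \<gamma> \<sigma> m"
proof (induct n)
  case 0 then show ?case by simp
next
  case (Suc n) then show ?case
    by (cases "m = Suc n") (auto simp: le_Suc_eq)
qed
lemma pre_playg: "pre (playg \<gamma> \<sigma>) n = hist \<gamma> \<sigma> n"
proof (rule nth_equalityI)
  show "length (pre (playg \<gamma> \<sigma>) n) = length (hist \<gamma> \<sigma> n)" by simp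
  fix i assume "i < length (pre (playg \<gamma> \<sigma>) n)"
  then have i: "i < n" by simp
  have "hist \<gamma> \<sigma> (Suc i) ! i = hist \<gamma> \<sigma> n ! i" using i take_hist[of "Suc i" n \<gamma> \<sigma>]
    by (metis Suc_leI lessI nth_take)
  then show "pre (playg \<gamma> \<sigma>) n ! i = hist \<gamma> \<sigma> n ! i" using i by (simp add: playg_def)
qed
lemma playg_eq: "playg \<gamma> \<sigma> n = (if n < length \<gamma> then \<gamma> ! n else \<sigma> (pre (playg \<gamma> \<sigma>) n))"
  by (simp add: pre_playg playg_def nth_append)

definition consis :: "('c list \<Rightarrow> player) \<Rightarrow> player \<Rightarrow> ('c list \<Rightarrow> 'c) \<Rightarrow> 'c list \<Rightarrow> (nat \<Rightarrow> 'c) \<Rightarrow> bool" where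
  "consis d X s \<gamma> p \<longleftrightarrow> p \<in> cyl \<gamma> \<and> (\<forall>m \<ge> length \<gamma>. d (pre p m) = X \<longrightarrow> p m = s (pre p m))"

lemma playg_cyl: "playg \<gamma> \<sigma> \<in> cyl \<gamma>"
  by (simp add: cyl_def playg_eq[of \<gamma> \<sigma>])

lemma consis_playg: "(\<And>h. d h = X \<Longrightarrow> \<sigma>' h = \<sigma> h) \<Longrightarrow> consis d X \<sigma> \<gamma> (playg \<gamma> \<sigma>')"
  unfolding consis_def using playg_cyl[of \<gamma> \<sigma>'] by (auto simp: playg_eq[of \<gamma> \<sigma>'])

lemma pre_play_follow:
  assumes "\<And>n. p n = \<sigma> (pre p n)"
  shows "playg [] \<sigma> = p"
proof -
  have "hist [] \<sigma> n = pre p n" for n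
    by (induct n) (auto simp: pre_Suc assms[symmetric])
  then show ?thesis by (simp add: fun_eq_iff playg_def nth_append assms[symmetric])
qed

lemma Pres_cyl: "Pres d X \<gamma> s \<inter> cyl \<gamma> = {p. consis d X s \<gamma> p}"
proof (intro equalityI subsetI)
  fix p assume "p \<in> Pres d X \<gamma> s \<inter> cyl \<gamma>"
  then obtain \<sigma> where p: "p = playg [] \<sigma>" and h: "\<forall>h. d h = X \<and> take (length \<gamma>) h = \<gamma> \<longrightarrow> \<sigma> h = s h"
    and c: "p \<in> cyl \<gamma>" unfolding Pres_def by auto
  have "p m = s (pre p m)" if "m \<ge> length \<gamma>" "d (pre p m) = X" for m
  proof -
    have "take (length \<gamma>) (pre p m) = \<gamma>" using that c by (simp add: cyl_pre min_def)
    then show ?thesis using h that p playg_eq[of "[]" \<sigma> m] by simp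
  qed
  then show "p \<in> {p. consis d X s \<gamma> p}" using c by (simp add: consis_def)
next
  fix p assume "p \<in> {p. consis d X s \<gamma> p}"
  then have c: "p \<in> cyl \<gamma>" and h: "\<And>m. m \<ge> length \<gamma> \<Longrightarrow> d (pre p m) = X \<Longrightarrow> p m = s (pre p m)"
    by (auto simp: consis_def)
  define \<sigma> where "\<sigma> = (\<lambda>h. if d h = X \<and> take (length \<gamma>) h = \<gamma> then s h else p (length h))"
  have "p n = \<sigma> (pre p n)" for n
  proof (cases "d (pre p n) = X \<and> take (length \<gamma>) (pre p n) = \<gamma>")
    case True
    then have "length \<gamma> \<le> n" by (metis length_pre length_take min.bounded_iff nle_le take_pre)
    then show ?thesis using True h by (simp add: \<sigma>_def)
  next
    case False then show ?thesis unfolding \<sigma>_def by (simp only: if_False length_pre)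
  qed
  then have "playg [] \<sigma> = p" by (rule pre_play_follow)
  moreover have "\<forall>h. d h = X \<and> take (length \<gamma>) h = \<gamma> \<longrightarrow> \<sigma> h = s h" by (simp add: \<sigma>_def)
  ultimately show "p \<in> Pres d X \<gamma> s \<inter> cyl \<gamma>" using c unfolding Pres_def by blast
qed

lemma gX_alt: "gX d v r X \<gamma> s = {x. \<exists>p. consis d X s \<gamma> p \<and> \<not> prefX r X x (v p)}"
  unfolding gX_def Pres_cyl by simp


lemma swo_t3: "strict_weak_order r \<Longrightarrow> \<not> r a b \<Longrightarrow> \<not> r b c \<Longrightarrow> \<not> r a c"
  unfolding strict_weak_order_def by meson
lemma swo_irr: "strict_weak_order r \<Longrightarrow> \<not> r a a"
  unfolding strict_weak_order_def by meson
lemma pX_t3: "strict_weak_order r \<Longrightarrow> \<not> prefX r X a b \<Longrightarrow> \<not> prefX r X b c \<Longrightarrow> \<not> prefX r X a c"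
  using swo_t3[of r a b c] swo_t3[of r c b a] by (cases X) (simp_all add: prefX_def)
lemma pX_irr: "strict_weak_order r \<Longrightarrow> \<not> prefX r X a a"
  using swo_irr[of r a] by (cases X) (simp_all add: prefX_def)

lemma consis_closed: "closed_plays {q. consis d X s \<gamma> q}"
  unfolding closed_plays_def
proof (intro allI impI)
  fix p' assume a: "\<forall>n. \<exists>q \<in> {q. consis d X s \<gamma> q}. pre q n = pre p' n"
  then obtain q0 where q0: "consis d X s \<gamma> q0" "pre q0 (length \<gamma>) = pre p' (length \<gamma>)" by blast
  then have c: "p' \<in> cyl \<gamma>" by (simp add: consis_def cyl_pre)
  have "p' m = s (pre p' m)" if "m \<ge> length \<gamma>" "d (pre p' m) = X" for m
  proof -
    obtain q where q: "consis d X s \<gamma> q" "pre q (Suc m) = pre p' (Suc m)" using a by blast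
    then have "pre q m = pre p' m" "q m = p' m" by (simp_all add: pre_Suc)
    then show ?thesis using q(1) that by (simp add: consis_def)
  qed
  then show "p' \<in> {q. consis d X s \<gamma> q}" using c by (simp add: consis_def)
qed

lemma consis_mono:
  assumes "consis d X s h p" "take (length \<alpha>) h = \<alpha>" "length \<alpha> \<le> length h"
    "\<forall>m. length \<alpha> \<le> m \<and> m < length h \<and> d (take m h) = X \<longrightarrow> h!m = s (take m h)"
  shows "consis d X s \<alpha> p"
proof -
  have ph: "pre p (length h) = h" using assms(1) by (simp add: consis_def cyl_pre)
  have "pre p (length \<alpha>) = \<alpha>"
    using ph assms(2,3) take_pre[of "length \<alpha>" p "length h"] by (simp add: min_def)
  moreover have "p m = s (pre p m)" if "m \<ge> length \<alpha>" "d (pre p m) = X" for m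
  proof (cases "m < length h")
    case True
    have "take m h = pre p m" "h ! m = p m" using ph True
      by (metis min.strict_order_iff take_pre, metis pre_nth)
    then show ?thesis using assms(4) that True by metis
  next
    case False then show ?thesis using assms(1) that by (simp add: consis_def)
  qed
  ultimately show ?thesis by (simp add: consis_def cyl_pre)
qed

lemma gX_mono:
  assumes "take (length \<alpha>) h = \<alpha>" "length \<alpha> \<le> length h"
    "\<forall>m. length \<alpha> \<le> m \<and> m < length h \<and> d (take m h) = X \<longrightarrow> h!m = s (take m h)"
  shows "gX d v r X h s \<subseteq> gX d v r X \<alpha> s"
  using consis_mono[OF _ assms] by (auto simp: gX_alt)

lemma G_min:
  assumes swo: "strict_weak_order r"
    and ext: "\<And>E. E \<noteq> {} \<Longrightarrow> closed_plays E \<Longrightarrow>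
          (\<exists>x \<in> v ` E. \<forall>y \<in> v ` E. \<not> r x y) \<and> (\<exists>x \<in> v ` E. \<forall>y \<in> v ` E. \<not> r y x)"
    and o: "gX d v r X \<gamma> s = GX d v r X \<gamma>"
  shows "\<exists>q. consis d X s \<gamma> q \<and> GX d v r X \<gamma> = {x. \<not> prefX r X x (v q)}"
proof -
  let ?E = "{q. consis d X s \<gamma> q}"
  have ne: "?E \<noteq> {}" using consis_playg[of d X s s \<gamma>] by auto
  have "\<exists>w \<in> v ` ?E. \<forall>y \<in> v ` ?E. \<not> prefX r X y w"
    using ext[OF ne consis_closed] by (cases X) (auto simp: prefX_def)
  then obtain q where q: "consis d X s \<gamma> q" and w: "\<forall>p. consis d X s \<gamma> p \<longrightarrow> \<not> prefX r X (v p) (v q)"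
    by auto
  have "gX d v r X \<gamma> s = {x. \<not> prefX r X x (v q)}"
  proof (intro equalityI subsetI)
    fix x assume "x \<in> gX d v r X \<gamma> s"
    then obtain p where "consis d X s \<gamma> p" "\<not> prefX r X x (v p)" by (auto simp: gX_alt)
    then show "x \<in> {x. \<not> prefX r X x (v q)}" using w pX_t3[OF swo, of X x "v p" "v q"] by simp
  next
    fix x assume "x \<in> {x. \<not> prefX r X x (v q)}"
    then show "x \<in> gX d v r X \<gamma> s" using q by (auto simp: gX_alt)
  qed
  then show ?thesis using q o by auto
qed

lemma det_lemma:
  fixes d :: "'c list \<Rightarrow> player" and v :: "(nat \<Rightarrow> 'c) \<Rightarrow> 'o"
  assumes swo: "strict_weak_order r"
    and gam: "\<And>I \<gamma>. extremal_interval r I \<Longrightarrow> v -` I \<inter> cyl \<gamma> \<in> \<Gamma>"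
    and det: "\<And>W D. W \<in> \<Gamma> \<Longrightarrow> wl_determined D W"
    and x: "x \<in> GX d v r Pa \<gamma>" and y: "y \<in> GX d v r Pb \<gamma>"
  shows "\<not> r x y"
proof
  assume rxy: "r x y"
  define I where "I = {z. r x z}"
  have "extremal_interval r I" unfolding extremal_interval_def
  proof (rule disjI1, intro ballI allI impI)
    fix z y assume "z \<in> I" "\<not> r y z" then show "y \<in> I"
      using swo_t3[OF swo, of x y z] unfolding I_def by blast
  qed
  then have W: "v -` I \<inter> cyl \<gamma> \<in> \<Gamma>" by (rule gam)
  define D where "D = {h. length h < length \<gamma> \<or> d h = Pa}"
  have "wl_determined D (v -` I \<inter> cyl \<gamma>)" using det[OF W] .
  then show False unfolding wl_determined_def
  proof
    assume "\<exists>s1. \<forall>s2. wl_play D s1 s2 \<in> v -` I \<inter> cyl \<gamma>"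
    then obtain s1 where s1: "\<And>s2. wl_play D s1 s2 \<in> v -` I \<inter> cyl \<gamma>" by blast
    have "x \<in> gX d v r Pa \<gamma> s1" using x by (simp add: GX_def)
    then obtain p where p: "consis d Pa s1 \<gamma> p" and np: "\<not> r x (v p)"
      by (auto simp: gX_alt prefX_def)
    define s2 where "s2 = (\<lambda>h::'c list. p (length h))"
    let ?q = "wl_play D s1 s2"
    have qW: "?q \<in> cyl \<gamma>" "v ?q \<in> I" using s1[of s2] by auto
    let ?\<sigma> = "\<lambda>h. if h \<in> D then s1 h else s2 h"
    have "pre ?q n = pre p n" for n
    proof (induct n)
      case (Suc n)
      have "?q n = p n"
      proof (cases "n < length \<gamma>")
        case True then show ?thesis using qW(1) p by (simp add: consis_def cyl_def)
      next
        case False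
        have "?q n = ?\<sigma> (pre ?q n)" unfolding wl_play_def using playg_eq[of "[]" ?\<sigma> n] by simp
        also have "\<dots> = ?\<sigma> (pre p n)" using Suc by simp
        also have "\<dots> = p n" using False p by (auto simp: D_def s2_def consis_def)
        finally show ?thesis .
      qed
      then show ?case using Suc by (simp add: pre_Suc)
    qed simp
    then have "?q = p" by (metis lessI pre_nth ext)
    then show False using qW np by (simp add: I_def)
  next
    assume "\<exists>s2. \<forall>s1. wl_play D s1 s2 \<notin> v -` I \<inter> cyl \<gamma>"
    then obtain s2 where s2: "\<And>s1. wl_play D s1 s2 \<notin> v -` I \<inter> cyl \<gamma>" by blast
    have "y \<in> gX d v r Pb \<gamma> s2" using y by (simp add: GX_def)
    then obtain p where p: "consis d Pb s2 \<gamma> p" and np: "\<not> r (v p) y"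
      by (auto simp: gX_alt prefX_def)
    define s1 where "s1 = (\<lambda>h::'c list. p (length h))"
    let ?q = "wl_play D s1 s2"
    let ?\<sigma> = "\<lambda>h. if h \<in> D then s1 h else s2 h"
    have "pre ?q n = pre p n" for n
    proof (induct n)
      case (Suc n)
      have "?q n = ?\<sigma> (pre ?q n)" unfolding wl_play_def using playg_eq[of "[]" ?\<sigma> n] by simp
      also have "\<dots> = ?\<sigma> (pre p n)" using Suc by simp
      also have "\<dots> = p n" using p by (cases "d (pre p n)") (auto simp: D_def s1_def consis_def)
      finally show ?case using Suc by (simp add: pre_Suc)
    qed simp
    then have "?q = p" by (metis lessI pre_nth ext)
    then have "v p \<notin> I" using s2[of s1] p by (auto simp: consis_def)
    then have "\<not> r x (v p)" by (simp add: I_def)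
    then show False using np rxy swo_t3[OF swo, of x "v p" y] by simp
  qed
qed


primrec ancr :: "('c list \<Rightarrow> 'o set) \<Rightarrow> ('c list \<Rightarrow> 'c list \<Rightarrow> 'c) \<Rightarrow> ('c list \<Rightarrow> player) \<Rightarrow> player \<Rightarrow> 'c list \<Rightarrow> 'c list" where
  "ancr G S d X [] = []"
| "ancr G S d X (c # rh) = (let h = rev rh; \<alpha> = ancr G S d X rh in
     if G (h @ [c]) = G \<alpha> \<and> (d h = X \<longrightarrow> c = S \<alpha> h) then \<alpha> else h @ [c])"

lemma ancr_inv:
  "let \<alpha> = ancr G S d X (rev h) in take (length \<alpha>) h = \<alpha> \<and> length \<alpha> \<le> length h \<and> G h = G \<alpha> \<and>
     (\<forall>m. length \<alpha> \<le> m \<and> m < length h \<and> d (take m h) = X \<longrightarrow> h!m = S \<alpha> (take m h))"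
proof (induct h rule: rev_induct)
  case Nil then show ?case by simp
next
  case (snoc c h)
  let ?\<alpha> = "ancr G S d X (rev h)"
  show ?case
  proof (cases "G (h @ [c]) = G ?\<alpha> \<and> (d h = X \<longrightarrow> c = S ?\<alpha> h)")
    case True
    have r: "rev (h@[c]) = c # rev h" by simp
    have e: "ancr G S d X (rev (h @ [c])) = ?\<alpha>"
      unfolding r ancr.simps Let_def rev_rev_ident by (rule if_P[OF True])
    have IH: "take (length ?\<alpha>) h = ?\<alpha>" "length ?\<alpha> \<le> length h"
      "\<forall>m. length ?\<alpha> \<le> m \<and> m < length h \<and> d (take m h) = X \<longrightarrow> h!m = S ?\<alpha> (take m h)"
      using snoc by (simp_all add: Let_def)
    have "\<forall>m. length ?\<alpha> \<le> m \<and> m < length (h@[c]) \<and> d (take m (h@[c])) = X \<longrightarrow> (h@[c])!m = S ?\<alpha> (take m (h@[c]))"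
    proof (intro allI impI)
      fix m assume m: "length ?\<alpha> \<le> m \<and> m < length (h@[c]) \<and> d (take m (h@[c])) = X"
      show "(h@[c])!m = S ?\<alpha> (take m (h@[c]))"
      proof (cases "m < length h")
        case True then show ?thesis using IH(3) m by (simp add: nth_append)
      next
        case False then have "m = length h" using m by simp
        then show ?thesis using True m by simp
      qed
    qed
    then show ?thesis using e IH True by (simp add: Let_def)
  next
    case False
    have r: "rev (h@[c]) = c # rev h" by simp
    have e: "ancr G S d X (rev (h @ [c])) = h @ [c]"
      unfolding r ancr.simps Let_def rev_rev_ident by (rule if_not_P[OF False])
    show ?thesis unfolding e Let_def
    proof (intro conjI allI impI)
      fix m assume "length (h@[c]) \<le> m \<and> m < length (h@[c]) \<and> d (take m (h@[c])) = X"
      then have False by (elim conjE) linarith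
      then show "(h@[c])!m = S (h@[c]) (take m (h@[c]))" ..
    qed simp_all
  qed
qed

lemma ancr_snoc: "ancr G S d X (rev (h @ [c])) = (if G (h @ [c]) = G (ancr G S d X (rev h)) \<and>
   (d h = X \<longrightarrow> c = S (ancr G S d X (rev h)) h) then ancr G S d X (rev h) else h @ [c])"
  by (simp add: Let_def)

lemma closed_seq:
  assumes q: "\<And>n. pre (q n) n = pre p n"
  shows "closed_plays (insert p (q ` A))"
  unfolding closed_plays_def
proof (intro allI impI)
  fix p' assume a: "\<forall>n. \<exists>e \<in> insert p (q ` A). pre e n = pre p' n"
  show "p' \<in> insert p (q ` A)"
  proof (cases "p' = p")
    case True then show ?thesis by simp
  next
    case False
    then obtain k0 where k0: "p' k0 \<noteq> p k0" by auto
    let ?F = "A \<inter> {..k0}"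
    have F: "\<exists>n \<in> ?F. pre (q n) k = pre p' k" if "k > k0" for k
    proof -
      obtain e where e: "e \<in> insert p (q ` A)" "pre e k = pre p' k" using a by blast
      have ek: "e k0 = p' k0" using e(2) that by (metis pre_nth)
      then have "e \<noteq> p" using k0 by auto
      then obtain n where n: "n \<in> A" "e = q n" using e by auto
      have "n \<le> k0"
      proof (rule ccontr)
        assume "\<not> n \<le> k0"
        then have "q n k0 = p k0" using q[of n] by (metis not_le pre_nth)
        then show False using ek n k0 by simp
      qed
      then show ?thesis using n e by auto
    qed
    have "\<exists>n \<in> ?F. \<forall>k. pre (q n) k = pre p' k"
    proof (rule ccontr)
      assume "\<not> ?thesis"
      then have "\<forall>n \<in> ?F. \<exists>k. pre (q n) k \<noteq> pre p' k" by blast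
      then obtain K where K: "\<forall>n \<in> ?F. pre (q n) (K n) \<noteq> pre p' (K n)" by metis
      define k where "k = (\<Sum>n\<in>?F. K n) + Suc k0"
      obtain n where n: "n \<in> ?F" "pre (q n) k = pre p' k" using F[of k] by (auto simp: k_def)
      have "K n \<le> k" using n(1) unfolding k_def
        by (metis (no_types, lifting) finite_Int finite_atMost member_le_sum trans_le_add1 zero_le)
      then have "pre (q n) (K n) = pre p' (K n)" using n(2) take_pre[of "K n" "q n" k] take_pre[of "K n" p' k]
        by (simp add: min_def)
      then show False using K n(1) by blast
    qed
    then obtain n where "n \<in> ?F" "\<forall>k. pre (q n) k = pre p' k" by blast
    then have "q n = p'" by (metis lessI pre_nth ext)
    then show ?thesis using \<open>n \<in> ?F\<close> by auto
  qed
qed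


lemma FX:
  fixes d :: "'c list \<Rightarrow> player" and v :: "(nat \<Rightarrow> 'c) \<Rightarrow> 'o"
  assumes swo: "strict_weak_order r"
    and ext: "\<And>E. E \<noteq> {} \<Longrightarrow> closed_plays E \<Longrightarrow>
          (\<exists>x \<in> v ` E. \<forall>y \<in> v ` E. \<not> r x y) \<and> (\<exists>x \<in> v ` E. \<forall>y \<in> v ` E. \<not> r y x)"
    and opt: "\<And>\<gamma>. \<exists>s. gX d v r X \<gamma> s = GX d v r X \<gamma>"
  shows "\<exists>\<sigma>. \<forall>\<gamma> p. consis d X \<sigma> \<gamma> p \<longrightarrow> v p \<in> GX d v r X \<gamma>"
proof -
  define G where "G = GX d v r X"
  define S where "S = (\<lambda>\<gamma>. SOME s. gX d v r X \<gamma> s = G \<gamma>)"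
  have Sopt: "gX d v r X \<gamma> (S \<gamma>) = G \<gamma>" for \<gamma>
    unfolding S_def G_def by (rule someI_ex[OF opt])
  define anc where "anc = (\<lambda>h. ancr G S d X (rev h))"
  define \<sigma> where "\<sigma> = (\<lambda>h. S (anc h) h)"
  have inv: "take (length (anc h)) h = anc h" "length (anc h) \<le> length h" "G h = G (anc h)"
    "\<forall>m. length (anc h) \<le> m \<and> m < length h \<and> d (take m h) = X \<longrightarrow> h!m = S (anc h) (take m h)" for h
    using ancr_inv[of G S d X h] unfolding anc_def Let_def by auto
  have Gmono: "G h \<subseteq> G \<alpha>" if "take (length \<alpha>) h = \<alpha>" "length \<alpha> \<le> length h"
    "\<forall>m. length \<alpha> \<le> m \<and> m < length h \<and> d (take m h) = X \<longrightarrow> h!m = S \<alpha> (take m h)" for h \<alpha>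
  proof -
    have "G h \<subseteq> gX d v r X h (S \<alpha>)" unfolding G_def GX_def by blast
    also have "\<dots> \<subseteq> gX d v r X \<alpha> (S \<alpha>)" by (rule gX_mono[OF that])
    also have "\<dots> = G \<alpha>" by (rule Sopt)
    finally show ?thesis .
  qed
  have "v p \<in> G \<gamma>" if cp: "consis d X \<sigma> \<gamma> p" for \<gamma> p
  proof -
    define hh where "hh = pre p"
    have pg: "hh (length \<gamma>) = \<gamma>" using cp by (simp add: consis_def cyl_pre hh_def)
    have cs: "p n = S (anc (hh n)) (hh n)" if "n \<ge> length \<gamma>" "d (hh n) = X" for n
      using cp that by (simp add: consis_def hh_def \<sigma>_def)
    have anc_step: "anc (hh (Suc n)) = (if G (hh (Suc n)) = G (anc (hh n)) \<and>
        (d (hh n) = X \<longrightarrow> p n = S (anc (hh n)) (hh n)) then anc (hh n) else hh (Suc n))" for n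
      unfolding anc_def hh_def pre_Suc by (rule ancr_snoc)
    have M: "G (hh (Suc n)) \<subseteq> G (hh n)" if n: "n \<ge> length \<gamma>" for n
    proof -
      let ?\<alpha> = "anc (hh n)"
      have "G (hh (Suc n)) \<subseteq> G ?\<alpha>"
      proof (rule Gmono)
        show "take (length ?\<alpha>) (hh (Suc n)) = ?\<alpha>"
          using inv(1,2)[of "hh n"] by (simp add: hh_def pre_Suc)
        show "length ?\<alpha> \<le> length (hh (Suc n))" using inv(2)[of "hh n"] by (simp add: hh_def)
        show "\<forall>m. length ?\<alpha> \<le> m \<and> m < length (hh (Suc n)) \<and> d (take m (hh (Suc n))) = X \<longrightarrow>
           hh (Suc n) ! m = S ?\<alpha> (take m (hh (Suc n)))"
        proof (intro allI impI)
          fix m assume m: "length ?\<alpha> \<le> m \<and> m < length (hh (Suc n)) \<and> d (take m (hh (Suc n))) = X"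
          show "hh (Suc n) ! m = S ?\<alpha> (take m (hh (Suc n)))"
          proof (cases "m < n")
            case True
            then have "take m (hh (Suc n)) = take m (hh n)" "hh (Suc n) ! m = hh n ! m"
              by (simp_all add: hh_def min_def)
            then show ?thesis using inv(4)[of "hh n"] m True by (simp add: hh_def)
          next
            case False
            then have "m = n" using m by (simp add: hh_def)
            then show ?thesis using cs[OF n] m by (simp add: hh_def min_def)
          qed
        qed
      qed
      then show ?thesis using inv(3)[of "hh n"] by simp
    qed
    have chain: "G (hh m) \<subseteq> G (hh n)" if "length \<gamma> \<le> n" "n \<le> m" for n m
      using that(2)
    proof (induct m rule: dec_induct)
      case (step m)
      then show ?case using M[of m] that(1) by auto
    qed simp
    show ?thesis
    proof (cases "\<exists>N \<ge> length \<gamma>. \<forall>m \<ge> N. G (hh m) = G (hh N)")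
      case True
      then obtain N where N: "N \<ge> length \<gamma>" "\<And>m. m \<ge> N \<Longrightarrow> G (hh m) = G (hh N)" by blast
      define \<alpha> where "\<alpha> = anc (hh N)"
      have ancc: "anc (hh m) = \<alpha>" if "N \<le> m" for m
        using that
      proof (induct m rule: dec_induct)
        case base then show ?case by (simp add: \<alpha>_def)
      next
        case (step m)
        have "G (hh (Suc m)) = G (anc (hh m))"
          using N(2)[of "Suc m"] N(2)[of m] step(1) inv(3)[of "hh m"] by simp
        moreover have "d (hh m) = X \<longrightarrow> p m = S (anc (hh m)) (hh m)" using cs step(1) N(1) by simp
        ultimately show ?case using anc_step[of m] step(3) by simp
      qed
      have "consis d X (S \<alpha>) \<alpha> p"
        unfolding consis_def
      proof
        have "pre p (length \<alpha>) = \<alpha>" using inv(1,2)[of "hh N"]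
          by (simp add: \<alpha>_def hh_def min_def)
        then show "p \<in> cyl \<alpha>" by (simp add: cyl_pre)
        show "\<forall>m\<ge>length \<alpha>. d (pre p m) = X \<longrightarrow> p m = S \<alpha> (pre p m)"
        proof (intro allI impI)
          fix m assume m: "length \<alpha> \<le> m" "d (pre p m) = X"
          show "p m = S \<alpha> (pre p m)"
          proof (cases "m < N")
            case True
            have "take m (hh N) = pre p m" "hh N ! m = p m" using True by (simp_all add: hh_def min_def)
            then show ?thesis using inv(4)[of "hh N"] m True by (simp add: \<alpha>_def hh_def)
          next
            case False
            then show ?thesis using cs[of m] ancc[of m] m N(1) by (simp add: hh_def)
          qed
        qed
      qed
      then have "v p \<in> gX d v r X \<alpha> (S \<alpha>)" using pX_irr[OF swo] by (auto simp: gX_alt)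
      then have "v p \<in> G \<alpha>" using Sopt by simp
      also have "G \<alpha> = G (hh N)" using inv(3)[of "hh N"] by (simp add: \<alpha>_def)
      also have "\<dots> \<subseteq> G (hh (length \<gamma>))" using chain[of "length \<gamma>" N] N(1) by simp
      finally show ?thesis using pg by simp
    next
      case False
      then have inf: "\<exists>m \<ge> n. G (hh m) \<noteq> G (hh n)" if "n \<ge> length \<gamma>" for n
        using that by blast
      have "\<forall>n. \<exists>q. consis d X (S (hh n)) (hh n) q \<and> G (hh n) = {x. \<not> prefX r X x (v q)}"
        using G_min[OF swo ext Sopt[unfolded G_def]] unfolding G_def by blast
      then obtain q where q: "\<And>n. consis d X (S (hh n)) (hh n) (q n)"
        "\<And>n. G (hh n) = {x. \<not> prefX r X x (v (q n))}" by metis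
      have qp: "pre (q n) n = pre p n" for n using q(1)[of n] by (simp add: consis_def cyl_pre hh_def)
      define E where "E = insert p (q ` {n. length \<gamma> \<le> n})"
      have Ecl: "closed_plays E" unfolding E_def by (rule closed_seq[OF qp])
      have "\<exists>e \<in> v ` E. \<forall>y \<in> v ` E. \<not> prefX r X e y"
        using ext[OF _ Ecl] by (cases X) (auto simp: prefX_def E_def)
      then obtain e where e: "e \<in> E" "\<And>y. y \<in> E \<Longrightarrow> \<not> prefX r X (v e) (v y)" by auto
      have "e = p"
      proof (rule ccontr)
        assume "e \<noteq> p"
        then obtain n where n: "n \<ge> length \<gamma>" "e = q n" using e(1) by (auto simp: E_def)
        obtain m where m: "m \<ge> n" "G (hh m) \<noteq> G (hh n)" using inf[OF n(1)] by blast
        have "G (hh m) \<subseteq> G (hh n)" using chain[OF n(1) m(1)] .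
        then obtain x where x: "x \<in> G (hh n)" "x \<notin> G (hh m)" using m(2) by blast
        have "\<not> prefX r X x (v (q n))" "prefX r X x (v (q m))" using x q(2)[of n] q(2)[of m] by auto
        then have "prefX r X (v (q n)) (v (q m))" using pX_t3[OF swo, of X x "v (q n)" "v (q m)"] by blast
        moreover have "q m \<in> E" using m n by (auto simp: E_def)
        ultimately show False using e(2) n(2) by blast
      qed
      have "q (length \<gamma>) \<in> E" by (auto simp: E_def)
      then have "\<not> prefX r X (v p) (v (q (length \<gamma>)))" using e(2) \<open>e = p\<close> by blast
      then have "v p \<in> G (hh (length \<gamma>))" using q(2) by simp
      then show ?thesis using pg by simp
    qed
  qed
  then show ?thesis unfolding G_def by blast
qed

theorem lemma22:
  fixes d :: "'c list \<Rightarrow> player"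
    and v :: "(nat \<Rightarrow> 'c) \<Rightarrow> 'o"
    and r :: "'o \<Rightarrow> 'o \<Rightarrow> bool"
    and \<Gamma> :: "(nat \<Rightarrow> 'c) set set"
  assumes swo: "strict_weak_order r"
    and lim: "\<And>p \<phi>. strict_mono \<phi> \<Longrightarrow>
          (\<forall>n. d (pre p (\<phi> n)) = Pa \<and>
               GX d v r Pa (pre p (\<phi> (Suc n))) \<subset> GX d v r Pa (pre p (\<phi> n))) \<Longrightarrow>
          v p \<in> (\<Inter>n. GX d v r Pa (pre p (\<phi> n)))"
    and opt: "\<And>\<gamma>. (\<exists>s. gX d v r Pa \<gamma> s = GX d v r Pa \<gamma>) \<and> (\<exists>s. gX d v r Pb \<gamma> s = GX d v r Pb \<gamma>)"
    and ext: "\<And>E. E \<noteq> {} \<Longrightarrow> closed_plays E \<Longrightarrow>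
          (\<exists>x \<in> v ` E. \<forall>y \<in> v ` E. \<not> r x y) \<and> (\<exists>x \<in> v ` E. \<forall>y \<in> v ` E. \<not> r y x)"
    and gam: "\<And>I \<gamma>. extremal_interval r I \<Longrightarrow> v -` I \<inter> cyl \<gamma> \<in> \<Gamma>"
    and det: "\<And>W D. W \<in> \<Gamma> \<Longrightarrow> wl_determined D W"
  shows "\<exists>\<sigma>. is_SPE d v r \<sigma>"
proof -
  obtain \<sigma>a where a: "\<And>\<gamma> p. consis d Pa \<sigma>a \<gamma> p \<Longrightarrow> v p \<in> GX d v r Pa \<gamma>"
    using FX[OF swo ext, where X=Pa] opt by blast
  obtain \<sigma>b where b: "\<And>\<gamma> p. consis d Pb \<sigma>b \<gamma> p \<Longrightarrow> v p \<in> GX d v r Pb \<gamma>"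
    using FX[OF swo ext, where X=Pb] opt by blast
  define \<sigma> where "\<sigma> = (\<lambda>h. if d h = Pa then \<sigma>a h else \<sigma>b h)"
  have "is_SPE d v r \<sigma>"
    unfolding is_SPE_def
  proof (intro notI, elim exE)
    fix \<gamma> X s assume dev: "prefX r X (v (playg \<gamma> \<sigma>)) (v (playg \<gamma> (upd d \<sigma> X s)))"
    let ?p = "playg \<gamma> \<sigma>" and ?q = "playg \<gamma> (upd d \<sigma> X s)"
    have pa: "v ?p \<in> GX d v r Pa \<gamma>" by (rule a, rule consis_playg) (simp add: \<sigma>_def)
    have pb: "v ?p \<in> GX d v r Pb \<gamma>" by (rule b, rule consis_playg) (simp add: \<sigma>_def)
    show False
    proof (cases X)
      case Pa
      have "v ?q \<in> GX d v r Pb \<gamma>" by (rule b, rule consis_playg) (simp add: \<sigma>_def upd_def Pa)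
      then show False using det_lemma[OF swo gam det pa] dev Pa by (simp add: prefX_def)
    next
      case Pb
      have "v ?q \<in> GX d v r Pa \<gamma>" by (rule a, rule consis_playg) (simp add: \<sigma>_def upd_def Pb)
      then show False using det_lemma[OF swo gam det _ pb] dev Pb by (simp add: prefX_def)
    qed
  qed
  then show ?thesis by blast
qed

end
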